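(* Let $m$ be a positive integer. Then \[ \sum_L\mathbf r_L=\bigl(1-\mathbf h_1+\mathbf h_m-\mathbf h_{m+1}+\mathbf h_{2m}-\cdots\bigr)^{-1}=\Bigl(\sum_{n\ge0}(\mathbf h_{mn}-\mathbf h_{mn+1})\Bigr)^{-1}, \] where the sum on the left is over all compositions $L$ (including the empty one) with all parts less than $m$.
   Context: In $F\langle\langle X_1,X_2,\dots\rangle\rangle$ ($F$ a field of characteristic $0$, noncommuting variables), $\mathbf h_n=\sum_{i_1\le\cdots\le i_n}X_{i_1}\cdots X_{i_n}$ ($\mathbf h_0=1$), and for a composition $L=(L_1,\dots,L_k)$ of $n$, $\mathbf r_L=\sum X_{i_1}\cdots X_{i_n}$ over $(i_1,\dots,i_n)$ weakly increasing within consecutive blocks of lengths $L_1,\dots,L_k$ and strictly decreasing between consecutive blocks ($i_{L_1+\cdots+L_j}>i_{L_1+\cdots+L_j+1}$); $\mathbf r_\emptyset=1$. *)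

theory Defs
  imports Main
begin

text \<open>Noncommutative formal power series over a coefficient ring 'a in the
variables X_0, X_1, X_2, ... (indexed by nat; only the order of indices matters).
A series is its coefficient function on words (monomials X_{i_1}...X_{i_n}
are identified with the lists [i_1,...,i_n]).\<close>

type_synonym 'a ncseries = "nat list \<Rightarrow> 'a"

definition nc_one :: "'a::comm_ring_1 ncseries" where
  "nc_one w = (if w = [] then 1 else 0)"

definition nc_mult :: "'a::comm_ring_1 ncseries \<Rightarrow> 'a ncseries \<Rightarrow> 'a ncseries" where
  "nc_mult f g w = (\<Sum>k\<le>length w. f (take k w) * g (drop k w))"

text \<open>Formal (coefficientwise) sum of a family of series indexed by I; this is
the meaning of an infinite sum of series when every coefficient receives
only finitely many nonzero contributions (which is the case below).\<close>
definition ncsum :: "('i \<Rightarrow> 'a::comm_ring_1 ncseries) \<Rightarrow> 'i set \<Rightarrow> 'a ncseries" where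
  "ncsum f I w = (\<Sum>i\<in>{i\<in>I. f i w \<noteq> 0}. f i w)"

definition hser :: "nat \<Rightarrow> 'a::comm_ring_1 ncseries" where
  "hser n w = (if length w = n \<and> sorted w then 1 else 0)"

definition is_composition :: "nat list \<Rightarrow> bool" where
  "is_composition L \<longleftrightarrow> (\<forall>x\<in>set L. 0 < x)"

text \<open>r_L: words of length |L| (= sum of parts), weakly increasing inside each block
and strictly decreasing across each block boundary. With 0-based positions j,
a block boundary lies between j and j+1 iff j+1 = L_1+...+L_k for some 1 \<le> k < length L.\<close>
definition rser :: "nat list \<Rightarrow> 'a::comm_ring_1 ncseries" where
  "rser L w = (if length w = sum_list L \<and>
      (\<forall>j. j + 1 < length w \<longrightarrow>
         (if (\<exists>k. 1 \<le> k \<and> k < length L \<and> j + 1 = sum_list (take k L))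
          then w ! j > w ! (j + 1) else w ! j \<le> w ! (j + 1)))
     then 1 else 0)"

end

theory Submission imports Defs begin



fun gd :: "nat list \<Rightarrow> nat list \<Rightarrow> bool" where
  "gd [] w = (w = [])"
| "gd (a # L) w = (0 < a \<and> a \<le> length w \<and> sorted (take a w) \<and> gd L (drop a w)
      \<and> (L \<noteq> [] \<longrightarrow> w ! a < w ! (a - 1)))"

lemma gd_len: "gd L w \<Longrightarrow> length w = sum_list L"
proof (induction L arbitrary: w)
  case (Cons a L)
  then have "gd L (drop a w)" by simp
  then have "length (drop a w) = sum_list L" by (rule Cons.IH)
  then show ?case using Cons.prems by auto
qed simp

lemma gd_comp: "gd L w \<Longrightarrow> is_composition L"
  by (induction L arbitrary: w) (auto simp: is_composition_def)

lemma gd_nonempty: "gd L w \<Longrightarrow> w \<noteq> [] \<Longrightarrow> L \<noteq> []"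
  by (cases L) auto

lemma gd_exists: "\<exists>L. gd L w"
proof (induction w)
  case Nil
  show ?case by (rule exI[of _ "[]"]) simp
next
  case (Cons x w)
  then obtain L where L: "gd L w" by blast
  show ?case
  proof (cases "w = []")
    case True
    then show ?thesis by (intro exI[of _ "[1]"]) simp
  next
    case False
    then obtain a L' where aL: "L = a # L'" using gd_nonempty[OF L] by (cases L) auto
    have a: "0 < a" "a \<le> length w" "sorted (take a w)" "gd L' (drop a w)"
      "L' \<noteq> [] \<longrightarrow> w ! a < w ! (a - 1)" using L aL by auto
    show ?thesis
    proof (cases "x \<le> hd w")
      case True
      have hd: "hd (take a w) = hd w" using a False by (cases w; cases a) auto
      have "\<forall>y\<in>set (take a w). x \<le> y"
      proof
        fix y assume y: "y \<in> set (take a w)"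
        then obtain t where t: "take a w = hd w # t" using hd
          by (cases "take a w") auto
        with a(3) y have "hd w \<le> y" by auto
        with True show "x \<le> y" by simp
      qed
      then have "sorted (take (Suc a) (x # w))" using a(3) by simp
      moreover have "L' \<noteq> [] \<longrightarrow> (x # w) ! (Suc a) < (x # w) ! (Suc a - 1)"
        using a by (cases a) auto
      ultimately have "gd (Suc a # L') (x # w)" using a by simp
      then show ?thesis by blast
    next
      case False2: False
      have "gd (1 # L) (x # w)" using L False False2 by (cases w) auto
      then show ?thesis by blast
    qed
  qed
qed

lemma gd_unique: "gd L w \<Longrightarrow> gd L' w \<Longrightarrow> L = L'"
proof (induction L arbitrary: L' w)
  case Nil
  then show ?case using gd_nonempty by (cases L') auto
next
  case (Cons a L)
  from Cons.prems(2) Cons.prems(1) obtain b L'' where bL: "L' = b # L''"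
    using gd_nonempty by (cases L') auto
  have A: "0 < a" "a \<le> length w" "sorted (take a w)" "gd L (drop a w)"
      "L \<noteq> [] \<longrightarrow> w ! a < w ! (a - 1)" using Cons.prems(1) by auto
  have B: "0 < b" "b \<le> length w" "sorted (take b w)" "gd L'' (drop b w)"
      "L'' \<noteq> [] \<longrightarrow> w ! b < w ! (b - 1)" using Cons.prems(2) bL by auto
  have "a = b"
  proof (rule ccontr)
    assume "a \<noteq> b"
    then consider "a < b" | "b < a" by linarith
    then show False
    proof cases
      case 1
      have "drop a w \<noteq> []" using 1 B by simp
      then have "L \<noteq> []" using A gd_nonempty by blast
      then have "w ! a < w ! (a - 1)" using A by simp
      moreover have "take b w ! (a - 1) \<le> take b w ! a"
        using sorted_nth_mono[OF B(3), of "a - 1" a] 1 B by simp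
      ultimately show False using 1 A by simp
    next
      case 2
      have "drop b w \<noteq> []" using 2 A by simp
      then have "L'' \<noteq> []" using B gd_nonempty by blast
      then have "w ! b < w ! (b - 1)" using B by simp
      moreover have "take a w ! (b - 1) \<le> take a w ! b"
        using sorted_nth_mono[OF A(3), of "b - 1" b] 2 A by simp
      ultimately show False using 2 B by simp
    qed
  qed
  then show ?case using Cons.IH[OF A(4)] B(4) bL by simp
qed




definition QQ :: "nat list \<Rightarrow> nat \<Rightarrow> bool" where
  "QQ L i \<longleftrightarrow> (\<exists>k. 1 \<le> k \<and> k < length L \<and> i = sum_list (take k L))"

definition RR :: "nat list \<Rightarrow> nat list \<Rightarrow> bool" where
  "RR L w \<longleftrightarrow> length w = sum_list L \<and>
     (\<forall>j. j + 1 < length w \<longrightarrow> (w ! (j + 1) < w ! j \<longleftrightarrow> QQ L (j + 1)))"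

lemma rser_RR: "rser L w = (if RR L w then 1 else 0)"
proof -
  have "(\<forall>j. j + 1 < length w \<longrightarrow>
         (if (\<exists>k. 1 \<le> k \<and> k < length L \<and> j + 1 = sum_list (take k L))
          then w ! j > w ! (j + 1) else w ! j \<le> w ! (j + 1))) \<longleftrightarrow>
        (\<forall>j. j + 1 < length w \<longrightarrow> (w ! (j + 1) < w ! j \<longleftrightarrow> QQ L (j + 1)))"
  proof -
    have pt: "\<And>P (x::nat) y. (if P then y < x else x \<le> y) \<longleftrightarrow> (y < x \<longleftrightarrow> P)" by auto
    show ?thesis unfolding QQ_def pt by (rule refl)
  qed
  then show ?thesis unfolding rser_def RR_def by simp
qed

lemma QQ_Nil: "\<not> QQ [] i" by (simp add: QQ_def)

lemma QQ_pos: "is_composition L \<Longrightarrow> QQ L i \<Longrightarrow> 0 < i"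
proof -
  assume c: "is_composition L" and q: "QQ L i"
  then obtain k where k: "1 \<le> k" "k < length L" "i = sum_list (take k L)"
    unfolding QQ_def by blast
  then obtain b L0 where L: "L = b # L0" by (cases L) auto
  have "0 < b" using c L by (simp add: is_composition_def)
  moreover have "take k L = b # take (k - 1) L0" using k L by (cases k) auto
  ultimately show "0 < i" using k by simp
qed

lemma QQ_Cons: "QQ (a # L) i \<longleftrightarrow> (L \<noteq> [] \<and> i = a) \<or> (\<exists>i'. i = a + i' \<and> QQ L i')"
proof
  assume "QQ (a # L) i"
  then obtain k where k: "1 \<le> k" "k < Suc (length L)" "i = sum_list (take k (a # L))"
    unfolding QQ_def by auto
  show "(L \<noteq> [] \<and> i = a) \<or> (\<exists>i'. i = a + i' \<and> QQ L i')"
  proof (cases "k = 1")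
    case True then show ?thesis using k by (cases L) auto
  next
    case False
    then have "1 \<le> k - 1" "k - 1 < length L" "i = a + sum_list (take (k - 1) L)"
      using k by (auto simp: take_Cons')
    then show ?thesis unfolding QQ_def by blast
  qed
next
  assume "(L \<noteq> [] \<and> i = a) \<or> (\<exists>i'. i = a + i' \<and> QQ L i')"
  then show "QQ (a # L) i"
  proof
    assume "L \<noteq> [] \<and> i = a"
    then show ?thesis unfolding QQ_def by (intro exI[of _ 1]) auto
  next
    assume "\<exists>i'. i = a + i' \<and> QQ L i'"
    then obtain k where k: "1 \<le> k" "k < length L" "i = a + sum_list (take k L)"
      unfolding QQ_def by blast
    then show ?thesis unfolding QQ_def by (intro exI[of _ "Suc k"]) auto
  qed
qed

lemma RR_gd: "is_composition L \<Longrightarrow> RR L w \<longleftrightarrow> gd L w"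
proof (induction L arbitrary: w)
  case Nil
  then show ?case by (auto simp: RR_def QQ_Nil)
next
  case (Cons a L)
  have a: "0 < a" and cL: "is_composition L"
    using Cons.prems by (auto simp: is_composition_def)
  have IH: "RR L (drop a w) \<longleftrightarrow> gd L (drop a w)" using Cons.IH[OF cL] .
  have Qa: "QQ (a # L) (a + i) \<longleftrightarrow> QQ L i" if "0 < i" for i
    using that QQ_Cons[of a L "a + i"] by auto
  have Qlow: "\<not> QQ (a # L) i" if "i < a" for i
    using that QQ_Cons[of a L i] QQ_pos[OF cL] by auto
  have QA: "QQ (a # L) a \<longleftrightarrow> L \<noteq> []"
    using QQ_Cons[of a L a] QQ_pos[OF cL] by auto
  show ?case
  proof
    assume R: "RR (a # L) w"
    have len: "length w = a + sum_list L" using R by (simp add: RR_def)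
    have st: "sorted (take a w)"
      unfolding sorted_iff_nth_Suc
    proof (intro allI impI)
      fix j assume j: "Suc j < length (take a w)"
      have "\<not> (w ! (j + 1) < w ! j)" using R j Qlow[of "j+1"] by (auto simp: RR_def)
      then show "take a w ! j \<le> take a w ! Suc j" using j by simp
    qed
    have RL: "RR L (drop a w)"
      unfolding RR_def
    proof (intro conjI allI impI)
      show "length (drop a w) = sum_list L" using len by simp
      fix j assume j: "j + 1 < length (drop a w)"
      have "w ! (a + j + 1) < w ! (a + j) \<longleftrightarrow> QQ (a # L) (a + j + 1)"
        using R j by (auto simp: RR_def)
      also have "\<dots> \<longleftrightarrow> QQ L (j + 1)" using Qa[of "j+1"] by simp
      finally show "drop a w ! (j + 1) < drop a w ! j \<longleftrightarrow> QQ L (j + 1)"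
        using j by (simp add: add.assoc)
    qed
    have bd: "L \<noteq> [] \<longrightarrow> w ! a < w ! (a - 1)"
    proof
      assume "L \<noteq> []"
      then have "0 < sum_list L" using cL
        by (cases L) (auto simp: is_composition_def)
      then have "(a - 1) + 1 < length w" using len a by simp
      then have "w ! ((a - 1) + 1) < w ! (a - 1) \<longleftrightarrow> QQ (a # L) ((a - 1) + 1)"
        using R by (auto simp: RR_def)
      then show "w ! a < w ! (a - 1)" using QA \<open>L \<noteq> []\<close> a by simp
    qed
    show "gd (a # L) w" using a len st RL IH bd by simp
  next
    assume G: "gd (a # L) w"
    have g: "a \<le> length w" "sorted (take a w)" "gd L (drop a w)"
      "L \<noteq> [] \<longrightarrow> w ! a < w ! (a - 1)" using G by auto
    have RL: "RR L (drop a w)" using IH g by simp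
    have len: "length w = a + sum_list L" using RL g by (auto simp: RR_def)
    show "RR (a # L) w"
      unfolding RR_def
    proof (intro conjI allI impI)
      show "length w = sum_list (a # L)" using len by simp
      fix j assume j: "j + 1 < length w"
      consider "j + 1 < a" | "j + 1 = a" | "a < j + 1" by linarith
      then show "w ! (j + 1) < w ! j \<longleftrightarrow> QQ (a # L) (j + 1)"
      proof cases
        case 1
        have "take a w ! j \<le> take a w ! (j + 1)"
          using g(2) 1 j by (auto simp: sorted_iff_nth_Suc)
        then show ?thesis using Qlow[OF 1] 1 by simp
      next
        case 2
        have "L \<noteq> []" using len j 2 by auto
        then show ?thesis using g(4) QA 2 by auto
      next
        case 3
        define j' where "j' = j - a"
        have jj: "j = a + j'" using 3 j'_def by simp
        have "j' + 1 < length (drop a w)" using j jj by simp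
        moreover have "\<forall>j. j + 1 < length (drop a w) \<longrightarrow> (drop a w ! (j + 1) < drop a w ! j \<longleftrightarrow> QQ L (j + 1))"
          using RL unfolding RR_def by blast
        ultimately have "drop a w ! (j' + 1) < drop a w ! j' \<longleftrightarrow> QQ L (j' + 1)"
          by blast
        then show ?thesis using Qa[of "j'+1"] jj j by (simp add: add.assoc)
      qed
    qed
  qed
qed

lemma rser_gd: "is_composition L \<Longrightarrow> rser L w = (if gd L w then 1 else 0)"
  by (simp add: rser_RR RR_gd)




definition nw :: "nat \<Rightarrow> nat list \<Rightarrow> bool" where
  "nw m w \<longleftrightarrow> \<not> (\<exists>i. i + m \<le> length w \<and> sorted (take m (drop i w)))"

lemma nw_front:
  assumes m: "0 < m" and u: "sorted u" and d: "u \<noteq> [] \<Longrightarrow> q \<noteq> [] \<Longrightarrow> hd q < last u"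
  shows "nw m (u @ q) \<longleftrightarrow> nw m q \<and> length u < m"
proof
  assume N: "nw m (u @ q)"
  have "nw m q"
    unfolding nw_def
  proof
    assume "\<exists>i. i + m \<le> length q \<and> sorted (take m (drop i q))"
    then obtain i where i: "i + m \<le> length q" "sorted (take m (drop i q))" by blast
    have "drop (i + length u) (u @ q) = drop i q" by simp
    then have "(i + length u) + m \<le> length (u @ q) \<and> sorted (take m (drop (i + length u) (u @ q)))"
      using i by simp
    then show False using N unfolding nw_def by blast
  qed
  moreover have "length u < m"
  proof (rule ccontr)
    assume "\<not> length u < m"
    then have "0 + m \<le> length (u @ q) \<and> sorted (take m (drop 0 (u @ q)))"
      using u by (simp add: sorted_wrt_take)
    then show False using N unfolding nw_def by blast
  qed
  ultimately show "nw m q \<and> length u < m" by blast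
next
  assume A: "nw m q \<and> length u < m"
  show "nw m (u @ q)"
    unfolding nw_def
  proof
    assume "\<exists>i. i + m \<le> length (u @ q) \<and> sorted (take m (drop i (u @ q)))"
    then obtain i where i: "i + m \<le> length (u @ q)" "sorted (take m (drop i (u @ q)))" by blast
    show False
    proof (cases "length u \<le> i")
      case True
      have "drop i (u @ q) = drop (i - length u) q" using True by simp
      then have "(i - length u) + m \<le> length q \<and> sorted (take m (drop (i - length u) q))"
        using i True by simp
      then show False using A unfolding nw_def by blast
    next
      case False
      have ne: "u \<noteq> []" "q \<noteq> []" using False i A by auto
      let ?W = "take m (drop i (u @ q))"
      have l: "length u - i < length ?W" using False i A by (simp add: min_def; linarith)
      have "?W ! (length u - 1 - i) \<le> ?W ! (length u - i)"
        by (rule sorted_nth_mono[OF i(2) _ l]) simp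
      moreover have "length u - 1 - i < length u - i" "length u - 1 - i < m" using False A by auto
      moreover have "?W ! (length u - 1 - i) = last u"
        using False A ne calculation(2,3) by (simp add: nth_append last_conv_nth)
      moreover have "?W ! (length u - i) = hd q"
        using False A ne l by (simp add: nth_append hd_conv_nth)
      ultimately show False using d ne by simp
    qed
  qed
qed

lemma nw_back:
  assumes m: "0 < m" and u: "sorted u" and d: "p \<noteq> [] \<Longrightarrow> u \<noteq> [] \<Longrightarrow> hd u < last p"
  shows "nw m (p @ u) \<longleftrightarrow> nw m p \<and> length u < m"
proof
  assume N: "nw m (p @ u)"
  have "nw m p"
    unfolding nw_def
  proof
    assume "\<exists>i. i + m \<le> length p \<and> sorted (take m (drop i p))"
    then obtain i where i: "i + m \<le> length p" "sorted (take m (drop i p))" by blast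
    have "take m (drop i (p @ u)) = take m (drop i p)" using i by simp
    then have "i + m \<le> length (p @ u) \<and> sorted (take m (drop i (p @ u)))"
      using i by simp
    then show False using N unfolding nw_def by blast
  qed
  moreover have "length u < m"
  proof (rule ccontr)
    assume "\<not> length u < m"
    then have "length p + m \<le> length (p @ u) \<and> sorted (take m (drop (length p) (p @ u)))"
      using u by (simp add: sorted_wrt_take)
    then show False using N unfolding nw_def by blast
  qed
  ultimately show "nw m p \<and> length u < m" by blast
next
  assume A: "nw m p \<and> length u < m"
  show "nw m (p @ u)"
    unfolding nw_def
  proof
    assume "\<exists>i. i + m \<le> length (p @ u) \<and> sorted (take m (drop i (p @ u)))"
    then obtain i where i: "i + m \<le> length (p @ u)" "sorted (take m (drop i (p @ u)))" by blast
    show False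
    proof (cases "i + m \<le> length p")
      case True
      have "take m (drop i (p @ u)) = take m (drop i p)" using True by simp
      then show False using A i True unfolding nw_def by auto
    next
      case F: False
      show False
      proof (cases "length p \<le> i")
        case True
        then show False using i A by simp
      next
        case False
        have ne: "p \<noteq> []" "u \<noteq> []" using False F i by auto
        let ?W = "take m (drop i (p @ u))"
        have l: "length p - i < length ?W" using False F i by (simp add: min_def; linarith)
        have "?W ! (length p - 1 - i) \<le> ?W ! (length p - i)"
          by (rule sorted_nth_mono[OF i(2) _ l]) simp
        moreover have "length p - 1 - i < length p - i" "length p - 1 - i < m" using False F by auto
        moreover have "?W ! (length p - 1 - i) = last p"
          using False F ne calculation(2,3) by (simp add: nth_append last_conv_nth)
        moreover have "?W ! (length p - i) = hd u"
          using False F ne l by (simp add: nth_append hd_conv_nth)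
        ultimately show False using d ne by simp
      qed
    qed
  qed
qed

lemma gd_nw: "0 < m \<Longrightarrow> gd L w \<Longrightarrow> (\<forall>x\<in>set L. x < m) \<longleftrightarrow> nw m w"
proof (induction L arbitrary: w)
  case Nil
  then show ?case by (simp add: nw_def)
next
  case (Cons a L)
  have g: "0 < a" "a \<le> length w" "sorted (take a w)" "gd L (drop a w)"
    "L \<noteq> [] \<longrightarrow> w ! a < w ! (a - 1)" using Cons.prems by auto
  have d: "hd (drop a w) < last (take a w)" if "take a w \<noteq> []" "drop a w \<noteq> []"
  proof -
    have "L \<noteq> []" using gd_nonempty[OF g(4)] that by blast
    then have "w ! a < w ! (a - 1)" using g by simp
    moreover have "hd (drop a w) = w ! a" using that by (simp add: hd_drop_conv_nth)
    moreover have "last (take a w) = w ! (a - 1)" using that g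
      by (simp add: last_conv_nth)
    ultimately show ?thesis by simp
  qed
  have "nw m w \<longleftrightarrow> nw m (drop a w) \<and> length (take a w) < m"
    using nw_front[OF Cons.prems(1) g(3) d] by simp
  then show ?case using Cons.IH[OF Cons.prems(1) g(4)] g by auto
qed




lemma S_val:
  assumes m: "0 < m"
  shows "(ncsum (\<lambda>L. rser L) {L. is_composition L \<and> (\<forall>x\<in>set L. x < m)} w :: 'a::comm_ring_1)
         = (if nw m w then 1 else 0)"
proof -
  obtain L0 where L0: "gd L0 w" using gd_exists by blast
  have r1: "(rser L0 w :: 'a) = 1" using rser_gd[of L0 w] gd_comp[OF L0] L0 by simp
  let ?I = "{L. is_composition L \<and> (\<forall>x\<in>set L. x < m)}"
  have eq: "{L \<in> ?I. (rser L w :: 'a) \<noteq> 0} = (if nw m w then {L0} else {})"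
  proof -
    have "L \<in> ?I \<and> (rser L w :: 'a) \<noteq> 0 \<longleftrightarrow> L = L0 \<and> nw m w" for L
    proof
      assume H: "L \<in> ?I \<and> (rser L w :: 'a) \<noteq> 0"
      then have "gd L w" using rser_gd[of L w] by (auto split: if_splits)
      then have "L = L0" using gd_unique L0 by blast
      then show "L = L0 \<and> nw m w" using H gd_nw[OF m L0] by auto
    next
      assume H: "L = L0 \<and> nw m w"
      then show "L \<in> ?I \<and> (rser L w :: 'a) \<noteq> 0"
        using gd_nw[OF m L0] gd_comp[OF L0] r1 L0 by auto
    qed
    then show ?thesis by auto
  qed
  show ?thesis
    unfolding ncsum_def eq using r1 by auto
qed

lemma ncsum_finite:
  assumes "finite J" "J \<subseteq> I" "\<And>i. i \<in> I \<Longrightarrow> i \<notin> J \<Longrightarrow> f i w = 0"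
  shows "ncsum f I w = (\<Sum>i\<in>J. f i w)"
proof -
  have sub: "{i\<in>I. f i w \<noteq> 0} \<subseteq> J" using assms by blast
  have "(\<Sum>i\<in>{i\<in>I. f i w \<noteq> 0}. f i w) = (\<Sum>i\<in>J. f i w)"
    by (rule sum.mono_neutral_left[OF assms(1) sub]) (use assms in auto)
  then show ?thesis unfolding ncsum_def .
qed

lemma count_lemma:
  assumes m: "0 < (m::nat)"
  shows "(\<Sum>n\<le>N. (if N = m * n + c then 1 else 0) :: 'a::comm_ring_1)
        = (if c \<le> N \<and> m dvd (N - c) then 1 else 0)"
proof (cases "c \<le> N \<and> m dvd (N - c)")
  case True
  then obtain q where q: "N - c = m * q" by (auto elim: dvdE)
  have qN: "q \<le> N" using q m True
    by (metis diff_le_self dual_order.trans mult_le_mono1 mult_1 nat_mult_1_right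
        le_add2 less_one not_less Suc_leI mult.commute)
  have "(\<Sum>n\<le>N. (if N = m * n + c then 1 else 0) :: 'a) = (\<Sum>n\<le>N. if n = q then 1 else 0)"
  proof (rule sum.cong[OF refl])
    fix n assume "n \<in> {..N}"
    have "N = m * n + c \<longleftrightarrow> n = q" using q True m by auto
    then show "(if N = m * n + c then 1 else 0) = ((if n = q then 1 else 0) :: 'a)" by simp
  qed
  also have "\<dots> = 1" using qN by simp
  finally show ?thesis using True by simp
next
  case False
  have "(if N = m * n + c then 1 else 0) = (0::'a)" for n
    using False by auto
  then show ?thesis using False by simp
qed

definition ph :: "nat \<Rightarrow> nat \<Rightarrow> 'a::comm_ring_1" where
  "ph m k = (if m dvd k then 1 else 0) - (if 0 < k \<and> m dvd (k - 1) then 1 else 0)"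

lemma A_val:
  assumes m: "0 < m"
  shows "(ncsum (\<lambda>n. (\<lambda>w. hser (m * n) w - hser (m * n + 1) w)) UNIV w :: 'a::comm_ring_1)
        = (if sorted w then ph m (length w) else 0)"
proof -
  let ?N = "length w"
  have "ncsum (\<lambda>n. (\<lambda>w. hser (m * n) w - hser (m * n + 1) w)) UNIV w
      = (\<Sum>n\<le>?N. (hser (m * n) w - hser (m * n + 1) w :: 'a))"
  proof (rule ncsum_finite)
    fix n assume "n \<notin> {..?N}"
    then have "?N < n" by simp
    moreover have "n \<le> m * n" using m by simp
    ultimately have "?N \<noteq> m * n" "?N \<noteq> m * n + 1" by linarith+
    then show "(hser (m * n) w - hser (m * n + 1) w :: 'a) = 0"
      by (simp add: hser_def)
  qed auto
  also have "\<dots> = (if sorted w then (\<Sum>n\<le>?N. (if ?N = m * n + 0 then 1 else 0) :: 'a)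
       - (\<Sum>n\<le>?N. (if ?N = m * n + 1 then 1 else 0)) else 0)"
    by (simp add: hser_def sum_subtractf eq_commute)
  also have "\<dots> = (if sorted w then ph m (length w) else 0)"
    unfolding count_lemma[OF m] ph_def by (auto simp: Suc_le_eq)
  finally show ?thesis .
qed

lemma numeric:
  assumes m: "0 < m" and r: "0 < r"
  shows "(\<Sum>i\<le>r. (if r - i < m then ph m i else 0) :: 'a::comm_ring_1) = 0"
proof -
  define E :: "nat \<Rightarrow> 'a" where "E i = (if 0 < i \<and> m dvd (i - 1) then 1 else 0)" for i
  define a where "a = Suc r - m"
  have ph: "ph m i = E (Suc i) - E i" for i unfolding ph_def E_def by simp
  have set: "{i \<in> {..r}. r - i < m} = {a..<Suc r}" unfolding a_def by auto
  have "(\<Sum>i\<le>r. (if r - i < m then ph m i else 0) :: 'a) = (\<Sum>i\<in>{i \<in> {..r}. r - i < m}. ph m i)"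
    by (rule sum.inter_filter[symmetric]) simp
  also have "\<dots> = (\<Sum>i = a..<Suc r. E (Suc i) - E i)" unfolding set ph ..
  also have "\<dots> = E (Suc r) - E a" by (rule sum_Suc_diff') (simp add: a_def)
  also have "\<dots> = 0"
  proof (cases "m \<le> r")
    case True
    then have "0 < a" "a - 1 = r - m" unfolding a_def using m by auto
    moreover have "m dvd (r - m) \<longleftrightarrow> m dvd r" using True
      by (metis dvd_diff_nat dvd_refl le_add_diff_inverse2 dvd_add_left_iff add.commute)
    ultimately show ?thesis unfolding E_def by simp
  next
    case False
    then have "a = 0" unfolding a_def by simp
    moreover have "\<not> m dvd r" using False r by (auto dest: dvd_imp_le)
    ultimately show ?thesis unfolding E_def by simp
  qed
  finally show ?thesis .
qed




lemma SA_one: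
  fixes m :: nat and w :: "nat list"
  assumes m: "0 < m"
  shows "(\<Sum>k\<le>length w. ((if nw m (take k w) then 1 else 0) :: 'a::comm_ring_1)
            * (if sorted (drop k w) then ph m (length (drop k w)) else 0)) = nc_one w"
proof (cases "w = []")
  case True
  then show ?thesis using m by (simp add: nc_one_def nw_def ph_def)
next
  case False
  define n where "n = length w"
  have n0: "0 < n" using False n_def by simp
  define k0 where "k0 = (LEAST k. sorted (drop k w))"
  have s_last: "sorted (drop (n - 1) w)"
  proof -
    have "length (drop (n - 1) w) = 1" using n0 n_def by (simp add: Suc_le_eq)
    moreover have "\<And>xs::nat list. length xs = 1 \<Longrightarrow> sorted xs" by (case_tac xs) auto
    ultimately show ?thesis by blast
  qed
  have k0s: "sorted (drop k0 w)" unfolding k0_def by (rule LeastI[of "\<lambda>k. sorted (drop k w)", OF s_last])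
  have k0n: "k0 < n" using Least_le[of "\<lambda>k. sorted (drop k w)", OF s_last] n0 k0_def by simp
  have nots: "\<not> sorted (drop k w)" if "k < k0" for k
    using not_less_Least[of k "\<lambda>k. sorted (drop k w)"] that k0_def by simp
  have desc: "w ! k0 < w ! (k0 - 1)" if "0 < k0"
  proof -
    have e: "drop (k0 - 1) w = w ! (k0 - 1) # drop k0 w"
    proof -
      have "k0 - 1 < length w" using k0n n_def by simp
      moreover have "Suc (k0 - 1) = k0" using that by simp
      ultimately show ?thesis using Cons_nth_drop_Suc[of "k0 - 1" w] by simp
    qed
    have "\<not> sorted (drop (k0 - 1) w)" using nots that by simp
    then obtain y where y: "y \<in> set (drop k0 w)" "y < w ! (k0 - 1)"
      using k0s unfolding e by (auto simp: not_le)
    have hd: "drop k0 w = w ! k0 # drop (Suc k0) w" using k0n n_def by (simp add: Cons_nth_drop_Suc)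
    have "w ! k0 \<le> y" using k0s y(1) unfolding hd by auto
    then show ?thesis using y by simp
  qed
  define p where "p = take k0 w"
  define r where "r = n - k0"
  have r0: "0 < r" using k0n r_def by simp
  define T where "T k = ((if nw m (take k w) then 1 else 0) :: 'a)
            * (if sorted (drop k w) then ph m (length (drop k w)) else 0)" for k
  have Tval: "T (n - i) = (if i \<le> r then (if nw m p then 1 else 0) * (if r - i < m then ph m i else 0) else 0)"
    if "i \<le> n" for i
  proof (cases "i \<le> r")
    case False
    then show ?thesis unfolding T_def using nots[of "n - i"] r_def that by simp
  next
    case True
    define u where "u = take (r - i) (drop k0 w)"
    have ni: "n - i = k0 + (r - i)" using True r_def k0n by simp
    have tk: "take (n - i) w = p @ u" unfolding p_def u_def ni by (simp add: take_add)
    have us: "sorted u" unfolding u_def using k0s by simp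
    have d: "hd u < last p" if "p \<noteq> []" "u \<noteq> []"
    proof -
      have "0 < k0" using that p_def by simp
      moreover have "hd u = w ! k0" using that unfolding u_def using k0n n_def
        by (simp add: hd_drop_conv_nth)
      moreover have "last p = w ! (k0 - 1)" using that unfolding p_def using k0n n_def
        by (simp add: last_conv_nth)
      ultimately show ?thesis using desc by simp
    qed
    have lu: "length u = r - i" unfolding u_def using r_def n_def True by simp
    have "nw m (take (n - i) w) \<longleftrightarrow> nw m p \<and> r - i < m"
      using nw_back[OF m us d] tk lu by simp
    moreover have "sorted (drop (n - i) w)"
    proof -
      have "drop (n - i) w = drop (r - i) (drop k0 w)" unfolding ni by (simp add: add.commute)
      then show ?thesis using sorted_wrt_drop[OF k0s, of "r - i"] by simp
    qed
    moreover have "length (drop (n - i) w) = i" using that n_def by simp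
    ultimately show ?thesis unfolding T_def using True by simp
  qed
  have "(\<Sum>k\<le>length w. T k) = (\<Sum>i\<le>n. T (n - i))"
    unfolding n_def[symmetric]
    by (rule sum.reindex_bij_witness[of _ "\<lambda>i. n - i" "\<lambda>i. n - i"]) auto
  also have "\<dots> = (\<Sum>i\<le>n. (if i \<le> r then (if nw m p then 1 else 0) * (if r - i < m then ph m i else 0) else 0))"
    using Tval by (intro sum.cong) auto
  also have "\<dots> = (\<Sum>i\<le>r. (if nw m p then 1 else 0) * (if r - i < m then ph m i else 0))"
  proof -
    have "{..r} \<subseteq> {..n}" using r_def by auto
    then show ?thesis by (intro sum.mono_neutral_cong_right) auto
  qed
  also have "\<dots> = (if nw m p then 1 else 0) * (\<Sum>i\<le>r. (if r - i < m then ph m i else 0))"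
    by (simp add: sum_distrib_left)
  also have "\<dots> = 0" using numeric[where 'a='a, OF m r0] by simp
  finally show ?thesis unfolding T_def using False by (simp add: nc_one_def)
qed




lemma AS_one:
  fixes m :: nat and w :: "nat list"
  assumes m: "0 < m"
  shows "(\<Sum>k\<le>length w. (if sorted (take k w) then ph m (length (take k w)) else 0)
            * ((if nw m (drop k w) then 1 else 0) :: 'a::comm_ring_1)) = nc_one w"
proof (cases "w = []")
  case True
  then show ?thesis using m by (simp add: nc_one_def nw_def ph_def)
next
  case False
  define n where "n = length w"
  obtain L0 where L0: "gd L0 w" using gd_exists by blast
  then obtain a L' where aL: "L0 = a # L'" using gd_nonempty False by (cases L0) auto
  have g: "0 < a" "a \<le> n" "sorted (take a w)" "gd L' (drop a w)"
    "L' \<noteq> [] \<longrightarrow> w ! a < w ! (a - 1)" using L0 aL n_def by auto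
  have desc: "w ! a < w ! (a - 1)" if "a < n"
  proof -
    have "drop a w \<noteq> []" using that n_def by simp
    then have "L' \<noteq> []" using gd_nonempty[OF g(4)] by blast
    then show ?thesis using g by simp
  qed
  define q where "q = drop a w"
  define T where "T k = (if sorted (take k w) then ph m (length (take k w)) else 0)
            * ((if nw m (drop k w) then 1 else 0) :: 'a)" for k
  have Tval: "T k = (if k \<le> a then (if nw m q then 1 else 0) * (if a - k < m then ph m k else 0) else 0)"
    if "k \<le> n" for k
  proof (cases "k \<le> a")
    case False
    have "\<not> sorted (take k w)"
    proof
      assume s: "sorted (take k w)"
      have "take k w ! (a - 1) \<le> take k w ! a"
        by (rule sorted_nth_mono[OF s]) (use False that n_def in auto)
      then have "w ! (a - 1) \<le> w ! a" using False g(1) by simp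
      then show False using desc False that by fastforce
    qed
    then show ?thesis unfolding T_def using False by simp
  next
    case True
    define u where "u = drop k (take a w)"
    have dk: "drop k w = u @ q"
    proof -
      have "drop k w = drop k (take a w @ drop a w)" by simp
      also have "\<dots> = drop k (take a w) @ drop (k - length (take a w)) (drop a w)"
        by (rule drop_append)
      also have "\<dots> = u @ q" using True g(2) n_def by (simp add: u_def q_def)
      finally show ?thesis .
    qed
    have us: "sorted u" unfolding u_def using g(3) by simp
    have d: "hd q < last u" if "u \<noteq> []" "q \<noteq> []"
    proof -
      have an: "a < n" using that q_def n_def by simp
      moreover have "hd q = w ! a" using that unfolding q_def
        by (simp add: hd_drop_conv_nth)
      moreover have "last u = w ! (a - 1)" using that g(1) an n_def unfolding u_def
        by (simp add: last_conv_nth)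
      ultimately show ?thesis using desc by simp
    qed
    have lu: "length u = a - k" unfolding u_def using g(2) n_def by simp
    have "nw m (drop k w) \<longleftrightarrow> nw m q \<and> a - k < m"
      using nw_front[OF m us d] dk lu by simp
    moreover have "sorted (take k w)"
    proof -
      have "take k w = take k (take a w)" using True by simp
      then show ?thesis using sorted_wrt_take[OF g(3), of k] by simp
    qed
    moreover have "length (take k w) = k" using that n_def by simp
    ultimately show ?thesis unfolding T_def using True by simp
  qed
  have "(\<Sum>k\<le>length w. T k) = (\<Sum>k\<le>n. (if k \<le> a then (if nw m q then 1 else 0) * (if a - k < m then ph m k else 0) else 0))"
    unfolding n_def[symmetric] using Tval by (intro sum.cong) auto
  also have "\<dots> = (\<Sum>k\<le>a. (if nw m q then 1 else 0) * (if a - k < m then ph m k else 0))"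
  proof -
    have "{..a} \<subseteq> {..n}" using g(2) by auto
    then show ?thesis by (intro sum.mono_neutral_cong_right) auto
  qed
  also have "\<dots> = (if nw m q then 1 else 0) * (\<Sum>k\<le>a. (if a - k < m then ph m k else 0))"
    by (simp add: sum_distrib_left)
  also have "\<dots> = 0" using numeric[where 'a='a, OF m g(1)] by simp
  finally show ?thesis unfolding T_def using False by (simp add: nc_one_def)
qed

theorem corollary12:
  fixes m :: nat
  assumes "0 < m"
  defines "S \<equiv> (ncsum (\<lambda>L. rser L) {L. is_composition L \<and> (\<forall>x\<in>set L. x < m)}
                  :: 'a::field_char_0 ncseries)"
      and "A \<equiv> (ncsum (\<lambda>n. (\<lambda>w. hser (m * n) w - hser (m * n + 1) w)) UNIV
                  :: 'a::field_char_0 ncseries)"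
  shows "nc_mult S A = nc_one \<and> nc_mult A S = nc_one"
proof -
  have S: "S w = (if nw m w then 1 else 0)" for w
    unfolding S_def by (rule S_val[OF assms(1)])
  have A: "A w = (if sorted w then ph m (length w) else 0)" for w
    unfolding A_def by (rule A_val[OF assms(1)])
  have 1: "nc_mult S A = nc_one"
  proof
    fix w
    show "nc_mult S A w = nc_one w"
      unfolding nc_mult_def S A using SA_one[OF assms(1), of w] by simp
  qed
  have 2: "nc_mult A S = nc_one"
  proof
    fix w
    show "nc_mult A S w = nc_one w"
      unfolding nc_mult_def S A using AS_one[OF assms(1), of w] by simp
  qed
  show ?thesis using 1 2 by simp
qed


end
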